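(* Let $r,n,\delta\ge 2$ be natural numbers, let $m := \max\{\binom{rn-1}{r-1}n^2, \delta\}$ and $N := \binom{m-1}{n-1}$. Let $G$ be the graph with vertices $v_{i,j,k}$ for $i\in[n]$, $j\in[N]$, $k\in[m]$, and vertices $s_{i,X}$ for $i\in[n]$ and $X\subseteq[m]$ with $|X|=n$, whose edges are: $v_{i,j,k}v_{i',j',k'}$ whenever $i\neq i'$ and $k=k'$; and $s_{i,X}v_{i,j,k}$ whenever $k\in X$ (for all $j\in[N]$). Then $\gamma(G)=n$.
   Context: $[t]=\{1,\dots,t\}$. There are no other edges in $G$ than those listed. A set $D\subseteq V(G)$ is a total dominating set of $G$ if every vertex of $V(G)$ is adjacent to some vertex of $D$. $\gamma(G):=\min\{\chi(G[D]) : D \text{ a total dominating set of } G\}$, where $\chi$ is the chromatic number and $G[D]$ the induced subgraph. *)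

theory Defs
  imports Main
begin

text \<open>Generic graph notions for a graph given by a vertex set Vs and an adjacency
  predicate E (assumed symmetric and irreflexive on Vs).\<close>

definition total_dominating :: "'a set \<Rightarrow> ('a \<Rightarrow> 'a \<Rightarrow> bool) \<Rightarrow> 'a set \<Rightarrow> bool" where
  "total_dominating Vs E D \<longleftrightarrow> D \<subseteq> Vs \<and> (\<forall>v\<in>Vs. \<exists>d\<in>D. E v d)"

definition chromatic_number :: "'a set \<Rightarrow> ('a \<Rightarrow> 'a \<Rightarrow> bool) \<Rightarrow> nat" where
  "chromatic_number D E = (LEAST k. \<exists>c :: 'a \<Rightarrow> nat.
      (\<forall>v\<in>D. c v < k) \<and> (\<forall>u\<in>D. \<forall>v\<in>D. E u v \<longrightarrow> c u \<noteq> c v))"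

definition gamma_td :: "'a set \<Rightarrow> ('a \<Rightarrow> 'a \<Rightarrow> bool) \<Rightarrow> nat" where
  "gamma_td Vs E = Inf {chromatic_number D E | D. total_dominating Vs E D}"

datatype vtx = V nat nat nat | S nat "nat set"

definition lm_m :: "nat \<Rightarrow> nat \<Rightarrow> nat \<Rightarrow> nat" where
  "lm_m r n \<delta> = max (((r*n - 1) choose (r - 1)) * n^2) \<delta>"

definition lm_N :: "nat \<Rightarrow> nat \<Rightarrow> nat \<Rightarrow> nat" where
  "lm_N r n \<delta> = (lm_m r n \<delta> - 1) choose (n - 1)"

definition lm_verts :: "nat \<Rightarrow> nat \<Rightarrow> nat \<Rightarrow> vtx set" where
  "lm_verts r n \<delta> =
     {V i j k | i j k. i \<in> {1..n} \<and> j \<in> {1..lm_N r n \<delta>} \<and> k \<in> {1..lm_m r n \<delta>}}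
   \<union> {S i X | i X. i \<in> {1..n} \<and> X \<subseteq> {1..lm_m r n \<delta>} \<and> card X = n}"

fun lm_adj0 :: "vtx \<Rightarrow> vtx \<Rightarrow> bool" where
  "lm_adj0 (V i j k) (V i' j' k') = (i \<noteq> i' \<and> k = k')"
| "lm_adj0 (S i X) (V i' j k) = (i = i' \<and> k \<in> X)"
| "lm_adj0 _ _ = False"

definition lm_adj :: "nat \<Rightarrow> nat \<Rightarrow> nat \<Rightarrow> vtx \<Rightarrow> vtx \<Rightarrow> bool" where
  "lm_adj r n \<delta> u v \<longleftrightarrow> u \<in> lm_verts r n \<delta> \<and> v \<in> lm_verts r n \<delta> \<and>
     (lm_adj0 u v \<or> lm_adj0 v u)"

end

theory Submission
  imports Defs
begin

lemma m_big: "n * n \<le> lm_m r n \<delta>"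
proof -
  have "n * n \<le> ((r*n - 1) choose (r - 1)) * (n * n)"
  proof (cases "n = 0")
    case True then show ?thesis by simp
  next
    case False
    have "r \<le> r * n" using False by simp
    then have "r - 1 \<le> r * n - 1" by (rule diff_le_mono)
    then have pos: "0 < ((r*n - 1) choose (r - 1))" by (rule zero_less_binomial)
    have "1 * (n * n) \<le> ((r*n - 1) choose (r - 1)) * (n * n)"
      by (rule mult_le_mono1) (use pos in linarith)
    then show ?thesis by simp
  qed
  then show ?thesis unfolding lm_m_def power2_eq_square by (rule le_trans[OF _ max.cobounded1])
qed

lemma verts_finite: "finite (lm_verts r n \<delta>)"
proof -
  let ?m = "lm_m r n \<delta>" and ?N = "lm_N r n \<delta>"
  have A: "{V i j k | i j k. i \<in> {1..n} \<and> j \<in> {1..?N} \<and> k \<in> {1..?m}}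
        \<subseteq> (\<lambda>(i,j,k). V i j k) ` ({1..n} \<times> {1..?N} \<times> {1..?m})"
  proof (rule subsetI)
    fix x assume "x \<in> {V i j k | i j k. i \<in> {1..n} \<and> j \<in> {1..?N} \<and> k \<in> {1..?m}}"
    then obtain i j k where "x = V i j k" "i \<in> {1..n}" "j \<in> {1..?N}" "k \<in> {1..?m}" by blast
    then show "x \<in> (\<lambda>(i,j,k). V i j k) ` ({1..n} \<times> {1..?N} \<times> {1..?m})"
      by (intro image_eqI[where x="(i,j,k)"]) simp_all
  qed
  have B: "{S i X | i X. i \<in> {1..n} \<and> X \<subseteq> {1..?m} \<and> card X = n}
        \<subseteq> (\<lambda>(i,X). S i X) ` ({1..n} \<times> Pow {1..?m})"
  proof (rule subsetI)
    fix x assume "x \<in> {S i X | i X. i \<in> {1..n} \<and> X \<subseteq> {1..?m} \<and> card X = n}"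
    then obtain i X where "x = S i X" "i \<in> {1..n}" "X \<subseteq> {1..?m}" by blast
    then show "x \<in> (\<lambda>(i,X). S i X) ` ({1..n} \<times> Pow {1..?m})"
      by (intro image_eqI[where x="(i,X)"]) simp_all
  qed
  have A': "finite {V i j k | i j k. i \<in> {1..n} \<and> j \<in> {1..?N} \<and> k \<in> {1..?m}}"
    by (rule finite_subset[OF A]) simp
  have B': "finite {S i X | i X. i \<in> {1..n} \<and> X \<subseteq> {1..?m} \<and> card X = n}"
    by (rule finite_subset[OF B]) simp
  show ?thesis unfolding lm_verts_def using A' B' by (rule finite_UnI)
qed

lemma lower:
  assumes n1: "n \<ge> 1"
    and td: "total_dominating (lm_verts r n \<delta>) (lm_adj r n \<delta>) D"
    and c1: "\<forall>v\<in>D. c v < K"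
    and c2: "\<forall>u\<in>D. \<forall>v\<in>D. lm_adj r n \<delta> u v \<longrightarrow> c u \<noteq> c v"
  shows "n \<le> K"
proof -
  let ?m = "lm_m r n \<delta>"
  define KK where "KK i = {k\<in>{1..?m}. \<exists>j. V i j k \<in> D}" for i
  have DV: "D \<subseteq> lm_verts r n \<delta>" using td unfolding total_dominating_def by auto
  have small: "card ({1..?m} - KK i) \<le> n - 1" if i: "i \<in> {1..n}" for i
  proof (rule ccontr)
    assume "\<not> ?thesis"
    then have "n \<le> card ({1..?m} - KK i)" by simp
    then obtain X where X: "X \<subseteq> {1..?m} - KK i" "card X = n"
      by (meson obtain_subset_with_card_n)
    then have "S i X \<in> lm_verts r n \<delta>" using i unfolding lm_verts_def by blast
    then obtain d where d: "d \<in> D" "lm_adj r n \<delta> (S i X) d"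
      using td unfolding total_dominating_def by blast
    then have "lm_adj0 (S i X) d \<or> lm_adj0 d (S i X)" "d \<in> lm_verts r n \<delta>"
      unfolding lm_adj_def by auto
    moreover have "\<not> lm_adj0 d (S i X)" by (cases d) auto
    ultimately obtain j k where jk: "d = V i j k" "k \<in> X"
      by (cases "(S i X, d)" rule: lm_adj0.cases) auto
    then have "k \<in> {1..?m}" using X by auto
    then have "k \<in> KK i" using d jk unfolding KK_def by auto
    then show False using X jk by auto
  qed
  have "card (\<Union>i\<in>{1..n}. {1..?m} - KK i) \<le> (\<Sum>i\<in>{1..n}. card ({1..?m} - KK i))"
    by (rule card_UN_le) simp
  also have "\<dots> \<le> (\<Sum>i\<in>{1..n}. n - 1)" by (rule sum_mono) (use small in auto)
  also have "\<dots> = n * (n - 1)" by simp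
  also have "\<dots> < n * n" using n1 by simp
  also have "\<dots> \<le> ?m" by (rule m_big)
  finally have lt: "card (\<Union>i\<in>{1..n}. {1..?m} - KK i) < card {1..?m}" by simp
  have "\<not> {1..?m} \<subseteq> (\<Union>i\<in>{1..n}. {1..?m} - KK i)"
  proof
    assume sub: "{1..?m} \<subseteq> (\<Union>i\<in>{1..n}. {1..?m} - KK i)"
    have "(\<Union>i\<in>{1..n}. {1..?m} - KK i) \<subseteq> {1..?m}" by (rule UN_least) (rule Diff_subset)
    then have eq: "(\<Union>i\<in>{1..n}. {1..?m} - KK i) = {1..?m}" using sub by (rule equalityI)
    from lt show False unfolding eq by simp
  qed
  then obtain k where k1: "k \<in> {1..?m}" and k2: "k \<notin> (\<Union>i\<in>{1..n}. {1..?m} - KK i)"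
  proof -
    assume ns: "\<not> {1..?m} \<subseteq> (\<Union>i\<in>{1..n}. {1..?m} - KK i)"
      and th: "\<And>k. k \<in> {1..?m} \<Longrightarrow> k \<notin> (\<Union>i\<in>{1..n}. {1..?m} - KK i) \<Longrightarrow> thesis"
    show thesis
    proof (rule ccontr)
      assume "\<not> thesis"
      then have "\<And>k. k \<in> {1..?m} \<Longrightarrow> k \<in> (\<Union>i\<in>{1..n}. {1..?m} - KK i)"
        using th by (rule contrapos_np)
      then have "{1..?m} \<subseteq> (\<Union>i\<in>{1..n}. {1..?m} - KK i)" by (rule subsetI)
      then show False using ns by (rule notE[rotated])
    qed
  qed
  have k: "\<forall>i\<in>{1..n}. k \<in> KK i"
  proof
    fix i assume i: "i \<in> {1..n}"
    show "k \<in> KK i"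
    proof (rule ccontr)
      assume "k \<notin> KK i"
      then have "k \<in> {1..?m} - KK i" using k1 by (rule DiffI[rotated])
      then have "k \<in> (\<Union>i\<in>{1..n}. {1..?m} - KK i)" using i by (rule UN_I[rotated])
      then show False using k2 by (rule notE[rotated])
    qed
  qed
  define jj where "jj i = (SOME j. V i j k \<in> D)" for i
  have inD: "V i (jj i) k \<in> D" if "i \<in> {1..n}" for i
  proof -
    have "k \<in> KK i" using k that by (rule bspec)
    then have "\<exists>j. V i j k \<in> D" unfolding KK_def by simp
    then show ?thesis unfolding jj_def by (rule someI_ex)
  qed
  have "inj_on (\<lambda>i. c (V i (jj i) k)) {1..n}"
  proof (rule inj_onI, rule ccontr)
    fix a b assume ab: "a \<in> {1..n}" "b \<in> {1..n}" "c (V a (jj a) k) = c (V b (jj b) k)" "a \<noteq> b"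
    have "lm_adj r n \<delta> (V a (jj a) k) (V b (jj b) k)"
      unfolding lm_adj_def using inD[OF ab(1)] inD[OF ab(2)] DV ab(4) by auto
    then show False using c2 inD ab by blast
  qed
  moreover have "(\<lambda>i. c (V i (jj i) k)) ` {1..n} \<subseteq> {..<K}" using c1 inD by auto
  ultimately have "card {1..n} \<le> card {..<K}" by (meson card_inj_on_le finite_lessThan)
  then show ?thesis by simp
qed

lemma lower_chi:
  assumes n1: "n \<ge> 1"
    and td: "total_dominating (lm_verts r n \<delta>) (lm_adj r n \<delta>) D"
  shows "n \<le> chromatic_number D (lm_adj r n \<delta>)"
proof -
  have DV: "D \<subseteq> lm_verts r n \<delta>" using td unfolding total_dominating_def by auto
  then have "finite D" using verts_finite finite_subset by blast
  then obtain f :: "vtx \<Rightarrow> nat" and K where f: "f ` D = {i. i < K}" "inj_on f D"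
    using finite_imp_inj_to_nat_seg by blast
  let ?P = "\<lambda>k. \<exists>c :: vtx \<Rightarrow> nat. (\<forall>v\<in>D. c v < k) \<and>
      (\<forall>u\<in>D. \<forall>v\<in>D. lm_adj r n \<delta> u v \<longrightarrow> c u \<noteq> c v)"
  have "?P K"
  proof (rule exI[of _ f], intro conjI ballI impI)
    fix v assume "v \<in> D" then show "f v < K" using f by auto
  next
    fix u v assume "u \<in> D" "v \<in> D" "lm_adj r n \<delta> u v"
    moreover have "u \<noteq> v" using \<open>lm_adj r n \<delta> u v\<close>
      unfolding lm_adj_def by (cases u; cases v) auto
    ultimately show "f u \<noteq> f v" using f(2) by (meson inj_on_eq_iff)
  qed
  then have "?P (LEAST k. ?P k)" by (rule LeastI)
  then show ?thesis unfolding chromatic_number_def using lower[OF n1 td] by blast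
qed

theorem lemma2p4:
  fixes r n \<delta> :: nat
  assumes "r \<ge> 2" and "n \<ge> 2" and "\<delta> \<ge> 2"
  shows "gamma_td (lm_verts r n \<delta>) (lm_adj r n \<delta>) = n"
proof -
  let ?m = "lm_m r n \<delta>" and ?N = "lm_N r n \<delta>"
  have mn: "n \<le> ?m" using le_square[of n] m_big[of n r \<delta>] by linarith
  then have "n - 1 \<le> ?m - 1" by (rule diff_le_mono)
  then have "0 < ?N" unfolding lm_N_def by (rule zero_less_binomial)
  then have N1: "1 \<le> ?N" by simp
  define D0 where "D0 = {V i 1 k | i k. i \<in> {1..n} \<and> k \<in> {1..?m}}"
  have tdD0: "total_dominating (lm_verts r n \<delta>) (lm_adj r n \<delta>) D0"
    unfolding total_dominating_def
  proof (intro conjI ballI)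
    show "D0 \<subseteq> lm_verts r n \<delta>" unfolding D0_def lm_verts_def using N1 by auto
  next
    fix v assume v: "v \<in> lm_verts r n \<delta>"
    show "\<exists>d\<in>D0. lm_adj r n \<delta> v d"
    proof (cases v)
      case (V i j k)
      then have ijk: "i \<in> {1..n}" "k \<in> {1..?m}" using v unfolding lm_verts_def by auto
      define i' :: nat where "i' = (if i = 1 then 2 else 1)"
      have "i' \<in> {1..n}" "i' \<noteq> i" using assms(2) ijk unfolding i'_def by auto
      then have "V i' 1 k \<in> D0" unfolding D0_def using ijk by auto
      moreover have "V i' 1 k \<in> lm_verts r n \<delta>" using calculation N1 unfolding D0_def lm_verts_def by auto
      ultimately show ?thesis using v V \<open>i' \<noteq> i\<close> unfolding lm_adj_def by force
    next
      case (S i X)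
      then have iX: "i \<in> {1..n}" "X \<subseteq> {1..?m}" "card X = n" using v unfolding lm_verts_def by auto
      then have "X \<noteq> {}" using assms(2) by auto
      then obtain k where k: "k \<in> X" by blast
      then have "V i 1 k \<in> D0" unfolding D0_def using iX by auto
      moreover have "V i 1 k \<in> lm_verts r n \<delta>" using calculation N1 unfolding D0_def lm_verts_def by auto
      ultimately show ?thesis using v S k unfolding lm_adj_def by force
    qed
  qed
  have "chromatic_number D0 (lm_adj r n \<delta>) \<le> n"
    unfolding chromatic_number_def
  proof (rule Least_le, rule exI[of _ "\<lambda>v. case v of V i j k \<Rightarrow> i - 1 | S i X \<Rightarrow> 0"], intro conjI ballI impI)
    fix v assume "v \<in> D0" then show "(case v of V i j k \<Rightarrow> i - 1 | S i X \<Rightarrow> 0) < n"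
      unfolding D0_def by auto
  next
    fix u v assume "u \<in> D0" "v \<in> D0" "lm_adj r n \<delta> u v"
    then show "(case u of V i j k \<Rightarrow> i - 1 | S i X \<Rightarrow> 0) \<noteq> (case v of V i j k \<Rightarrow> i - 1 | S i X \<Rightarrow> 0)"
      unfolding D0_def lm_adj_def by auto
  qed
  moreover have "n \<le> chromatic_number D0 (lm_adj r n \<delta>)"
    using lower_chi tdD0 assms(2) by simp
  ultimately have eq: "chromatic_number D0 (lm_adj r n \<delta>) = n" by simp
  show ?thesis unfolding gamma_td_def
  proof (rule cInf_eq_minimum)
    show "n \<in> {chromatic_number D (lm_adj r n \<delta>) |D. total_dominating (lm_verts r n \<delta>) (lm_adj r n \<delta>) D}"
      using eq tdD0 by force
  next
    fix x assume "x \<in> {chromatic_number D (lm_adj r n \<delta>) |D. total_dominating (lm_verts r n \<delta>) (lm_adj r n \<delta>) D}"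
    then show "n \<le> x" using lower_chi assms(2) by auto
  qed
qed

end
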